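(* For every $n\geq 1$ and every $\varepsilon>0$ there is $M$ such that for all $m\geq M$, Duplicator has a winning strategy in the game $\Gamma_{\mathrm{HS}}(\mathbb M_m,\mathbb M_{m+1},n,\varepsilon)$.
   Context: $\mathbb M_m$ denotes the algebra of complex $m\times m$ matrices with matrix multiplication, addition, scalar multiplication and adjoint $a^*$ (conjugate transpose). For a vector $\xi=(x_1,\dots,x_m)\in\mathbb C^m$, $\|\xi\|=\sqrt{\sum_i|x_i|^2}$; the operator norm of $a\in\mathbb M_m$ is $\|a\|_{\mathrm{OP}}=\sup\{\|a\xi\|:\|\xi\|=1\}$, and the normalized Hilbert--Schmidt norm of $a=(a_{ij})$ is $\|a\|_{\mathrm{HS}}=\sqrt{\frac1m\sum_{i,j=1}^m|a_{ij}|^2}$. For $l,m,n\geq 1$ and $\varepsilon>0$, the game $\Gamma_{\mathrm{HS}}(\mathbb M_l,\mathbb M_m,n,\varepsilon)$ between Challenger and Duplicator lasts $n$ innings: in each inning Challenger chooses a matrix $x$ with $\|x\|_{\mathrm{OP}}\leq 1$ in one of $\mathbb M_l$, $\mathbb M_m$, and Duplicator responds with a matrix $x$ with $\|x\|_{\mathrm{OP}}\leq 1$ in the other algebra; thus in inning $j$ matrices $a_j\in\mathbb M_l$ and $b_j\in\mathbb M_m$ are determined (repetitions are allowed). After $n$ innings Duplicator wins iff for all $i,j,k\leq n$ and all complex numbers $y,z$ with $\max(|y|,|z|)\leq 1$, each of the quantities $\big|\|a_i\|_{\mathrm{HS}}-\|b_i\|_{\mathrm{HS}}\big|$, $\big|\|a_ia_j-a_k\|_{\mathrm{HS}}-\|b_ib_j-b_k\|_{\mathrm{HS}}\big|$,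 $\big|\|ya_i+za_j-a_k\|_{\mathrm{HS}}-\|yb_i+zb_j-b_k\|_{\mathrm{HS}}\big|$ and $\big|\|a_i^*-a_j\|_{\mathrm{HS}}-\|b_i^*-b_j\|_{\mathrm{HS}}\big|$ is at most $\varepsilon$; otherwise Challenger wins. A winning strategy for a player is a rule specifying that player's moves as a function of previous moves such that the player wins regardless of the opponent's play. *)

theory Defs
  imports Complex_Main "Jordan_Normal_Form.Matrix"
begin

definition cvec_norm :: "complex vec \<Rightarrow> real" where
  "cvec_norm v = sqrt (\<Sum>i<dim_vec v. (cmod (v $ i))\<^sup>2)"

definition op_norm :: "complex mat \<Rightarrow> real" where
  "op_norm a = (SUP x\<in>{x. x \<in> carrier_vec (dim_col a) \<and> cvec_norm x = 1}. cvec_norm (a *\<^sub>v x))"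

definition hs_norm :: "complex mat \<Rightarrow> real" where
  "hs_norm a = sqrt ((1 / real (dim_row a)) *
      (\<Sum>i<dim_row a. \<Sum>j<dim_col a. (cmod (a $$ (i, j)))\<^sup>2))"

definition adj :: "complex mat \<Rightarrow> complex mat" where
  "adj a = mat (dim_col a) (dim_row a) (\<lambda>(i, j). cnj (a $$ (j, i)))"

definition unit_ball :: "nat \<Rightarrow> complex mat set" where
  "unit_ball m = {x \<in> carrier_mat m m. op_norm x \<le> 1}"

text \<open>A Duplicator strategy maps the history of previous innings (each recorded as
  (side chosen by Challenger, Challenger's matrix, Duplicator's matrix)) together with
  Challenger's current move (side, matrix) to Duplicator's response.
  Side True means Challenger plays in the first algebra M_l, False means in M_m.\<close>
type_synonym dup_strategy =
  "(bool \<times> complex mat \<times> complex mat) list \<Rightarrow> bool \<Rightarrow> complex mat \<Rightarrow> complex mat"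

definition play :: "dup_strategy \<Rightarrow> (bool \<times> complex mat) list \<Rightarrow> (bool \<times> complex mat \<times> complex mat) list" where
  "play \<sigma> cs = foldl (\<lambda>h (s, x). h @ [(s, x, \<sigma> h s x)]) [] cs"

text \<open>Matrix in the first algebra (a_j) and in the second algebra (b_j) of an inning.\<close>
definition left_mat :: "bool \<times> complex mat \<times> complex mat \<Rightarrow> complex mat" where
  "left_mat e = (case e of (s, x, y) \<Rightarrow> if s then x else y)"

definition right_mat :: "bool \<times> complex mat \<times> complex mat \<Rightarrow> complex mat" where
  "right_mat e = (case e of (s, x, y) \<Rightarrow> if s then y else x)"

definition dup_wins_play :: "nat \<Rightarrow> real \<Rightarrow> (nat \<Rightarrow> complex mat) \<Rightarrow> (nat \<Rightarrow> complex mat) \<Rightarrow> bool" where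
  "dup_wins_play n \<epsilon> a b \<longleftrightarrow>
    (\<forall>i<n. \<forall>j<n. \<forall>k<n. \<forall>y z :: complex. max (cmod y) (cmod z) \<le> 1 \<longrightarrow>
       \<bar>hs_norm (a i) - hs_norm (b i)\<bar> \<le> \<epsilon> \<and>
       \<bar>hs_norm (a i * a j - a k) - hs_norm (b i * b j - b k)\<bar> \<le> \<epsilon> \<and>
       \<bar>hs_norm (y \<cdot>\<^sub>m a i + z \<cdot>\<^sub>m a j - a k) - hs_norm (y \<cdot>\<^sub>m b i + z \<cdot>\<^sub>m b j - b k)\<bar> \<le> \<epsilon> \<and>
       \<bar>hs_norm (adj (a i) - a j) - hs_norm (adj (b i) - b j)\<bar> \<le> \<epsilon>)"

text \<open>sigma is a winning strategy for Duplicator in Gamma_HS(M_l, M_m, n, eps):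
  against every sequence of n legal Challenger moves, every response of sigma is legal
  (a matrix of operator norm at most 1 in the other algebra) and Duplicator wins.
  (Since sigma is deterministic, quantifying over Challenger's move sequences covers all
  adaptive Challenger behaviour.)\<close>
definition dup_winning_strategy :: "nat \<Rightarrow> nat \<Rightarrow> nat \<Rightarrow> real \<Rightarrow> dup_strategy \<Rightarrow> bool" where
  "dup_winning_strategy l m n \<epsilon> \<sigma> \<longleftrightarrow>
    (\<forall>cs. length cs = n \<and> (\<forall>(s, x)\<in>set cs. x \<in> unit_ball (if s then l else m)) \<longrightarrow>
       (let h = play \<sigma> cs in
          (\<forall>(s, x, y)\<in>set h. y \<in> unit_ball (if s then m else l)) \<and>
          dup_wins_play n \<epsilon> (\<lambda>i. left_mat (h ! i)) (\<lambda>i. right_mat (h ! i))))"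

end

theory Submission
  imports Defs "HOL-Analysis.L2_Norm"
begin

lemma cvec_norm_L2: "cvec_norm v = L2_set (\<lambda>i. cmod (v $ i)) {..<dim_vec v}"
  by (simp add: cvec_norm_def L2_set_def)

lemma cvec_norm_smult: "cvec_norm (k \<cdot>\<^sub>v v) = cmod k * cvec_norm v"
  unfolding cvec_norm_L2 by (simp add: L2_set_right_distrib norm_mult, rule L2_set_cong, auto simp: norm_mult)

lemma mat_vec_entry:
  assumes "A \<in> carrier_mat r c" "v \<in> carrier_vec c" "i < r"
  shows "(A *\<^sub>v v) $ i = (\<Sum>j<c. A $$ (i,j) * v $ j)"
  using assms by (auto simp: scalar_prod_def lessThan_atLeast0 intro!: sum.cong)

lemma mat_mult_entry:
  assumes "A \<in> carrier_mat r k" "B \<in> carrier_mat k c" "i < r" "j < c"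
  shows "(A * B) $$ (i,j) = (\<Sum>l<k. A $$ (i,l) * B $$ (l,j))"
  using assms by (auto simp: scalar_prod_def lessThan_atLeast0 intro!: sum.cong)

lemma cvec_norm_nonneg: "cvec_norm v \<ge> 0"
  by (simp add: cvec_norm_def sum_nonneg)

lemma entry_le_cvec_norm: "i < dim_vec v \<Longrightarrow> cmod (v $ i) \<le> cvec_norm v"
  unfolding cvec_norm_L2 by (rule member_le_L2_set) auto

lemma op_bdd:
  assumes "b \<in> carrier_mat N N"
  shows "bdd_above ((\<lambda>x. cvec_norm (b *\<^sub>v x)) ` {x. x \<in> carrier_vec (dim_col b) \<and> cvec_norm x = 1})"
proof (rule bdd_aboveI2)
  fix x assume x: "x \<in> {x. x \<in> carrier_vec (dim_col b) \<and> cvec_norm x = 1}"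
  hence xc: "x \<in> carrier_vec N" and xn: "cvec_norm x = 1" using assms by auto
  have xj: "cmod (x $ j) \<le> 1" if "j < N" for j
    using entry_le_cvec_norm[of j x] xc xn that by auto
  have "cvec_norm (b *\<^sub>v x) \<le> (\<Sum>i<N. cmod ((b *\<^sub>v x) $ i))"
    unfolding cvec_norm_L2 using assms L2_set_le_sum_abs[of "\<lambda>i. cmod ((b *\<^sub>v x) $ i)" "{..<N}"] by simp
  also have "\<dots> \<le> (\<Sum>i<N. \<Sum>j<N. cmod (b $$ (i,j)))"
  proof (rule sum_mono)
    fix i assume "i \<in> {..<N}"
    hence "cmod ((b *\<^sub>v x) $ i) = cmod (\<Sum>j<N. b $$ (i,j) * x $ j)"
      using mat_vec_entry[OF assms xc] by auto
    also have "\<dots> \<le> (\<Sum>j<N. cmod (b $$ (i,j) * x $ j))" by (rule norm_sum)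
    also have "\<dots> \<le> (\<Sum>j<N. cmod (b $$ (i,j)))"
      by (rule sum_mono) (auto simp: norm_mult intro!: mult_left_le[OF xj])
    finally show "cmod ((b *\<^sub>v x) $ i) \<le> (\<Sum>j<N. cmod (b $$ (i,j)))" .
  qed
  finally show "cvec_norm (b *\<^sub>v x) \<le> (\<Sum>i<N. \<Sum>j<N. cmod (b $$ (i,j)))" .
qed

lemma op_bound:
  assumes b: "b \<in> carrier_mat N N" and v: "v \<in> carrier_vec N"
  shows "cvec_norm (b *\<^sub>v v) \<le> op_norm b * cvec_norm v"
proof (cases "cvec_norm v = 0")
  case True
  hence "\<forall>i\<in>{..<N}. cmod (v $ i) = 0" using v unfolding cvec_norm_L2
    by (subst (asm) L2_set_eq_0_iff) auto
  hence "\<forall>i<N. (b *\<^sub>v v) $ i = 0" using mat_vec_entry[OF b v] by auto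
  hence "cvec_norm (b *\<^sub>v v) = 0" using b unfolding cvec_norm_L2
    by (subst L2_set_eq_0_iff) auto
  thus ?thesis using True by simp
next
  case False
  hence pos: "cvec_norm v > 0" using cvec_norm_nonneg[of v] by auto
  define u where "u = (1 / complex_of_real (cvec_norm v)) \<cdot>\<^sub>v v"
  have uc: "u \<in> carrier_vec N" using v by (simp add: u_def)
  have un: "cvec_norm u = 1" using pos by (simp add: u_def cvec_norm_smult norm_divide)
  have "cvec_norm (b *\<^sub>v u) \<le> op_norm b"
    unfolding op_norm_def
    by (rule cSUP_upper[OF _ op_bdd[OF b]]) (use uc un b in auto)
  moreover have "b *\<^sub>v u = (1 / complex_of_real (cvec_norm v)) \<cdot>\<^sub>v (b *\<^sub>v v)"
    unfolding u_def by (rule mult_mat_vec[OF b v])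
  ultimately have "cvec_norm (b *\<^sub>v v) / cvec_norm v \<le> op_norm b"
    using pos by (simp add: cvec_norm_smult norm_divide)
  thus ?thesis using pos by (simp add: divide_le_eq mult.commute)
qed

definition RCf :: "(nat \<times> nat \<Rightarrow> real) \<Rightarrow> nat \<Rightarrow> real \<Rightarrow> bool" where
  "RCf f N C \<longleftrightarrow> (\<forall>p<N. L2_set (\<lambda>j. f (p,j)) {..<N} \<le> C) \<and> (\<forall>q<N. L2_set (\<lambda>i. f (i,q)) {..<N} \<le> C)"

definition OB :: "complex mat \<Rightarrow> nat \<Rightarrow> real \<Rightarrow> bool" where
  "OB c N C \<longleftrightarrow> (\<forall>v\<in>carrier_vec N. cvec_norm (c *\<^sub>v v) \<le> C * cvec_norm v)"

lemma RCf_add: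
  assumes "RCf g N Cg" "RCf h N Ch"
    and "\<And>i j. i < N \<Longrightarrow> j < N \<Longrightarrow> 0 \<le> f (i,j) \<and> f (i,j) \<le> g (i,j) + h (i,j)"
  shows "RCf f N (Cg + Ch)"
  unfolding RCf_def
proof safe
  fix p assume p: "p < N"
  have "L2_set (\<lambda>j. f (p,j)) {..<N} \<le> L2_set (\<lambda>j. g (p,j) + h (p,j)) {..<N}"
    by (rule L2_set_mono) (use assms(3) p in auto)
  also have "\<dots> \<le> L2_set (\<lambda>j. g (p,j)) {..<N} + L2_set (\<lambda>j. h (p,j)) {..<N}"
    by (rule L2_set_triangle_ineq)
  also have "\<dots> \<le> Cg + Ch" using assms(1,2) p unfolding RCf_def by (auto intro: add_mono)
  finally show "L2_set (\<lambda>j. f (p,j)) {..<N} \<le> Cg + Ch" .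
next
  fix p assume p: "p < N"
  have "L2_set (\<lambda>j. f (j,p)) {..<N} \<le> L2_set (\<lambda>j. g (j,p) + h (j,p)) {..<N}"
    by (rule L2_set_mono) (use assms(3) p in auto)
  also have "\<dots> \<le> L2_set (\<lambda>j. g (j,p)) {..<N} + L2_set (\<lambda>j. h (j,p)) {..<N}"
    by (rule L2_set_triangle_ineq)
  also have "\<dots> \<le> Cg + Ch" using assms(1,2) p unfolding RCf_def by (auto intro: add_mono)
  finally show "L2_set (\<lambda>j. f (j,p)) {..<N} \<le> Cg + Ch" .
qed

lemma RCf_swap: "RCf f N C \<Longrightarrow> RCf (\<lambda>(i,j). f (j,i)) N C"
  unfolding RCf_def by auto

lemma RCf_zero: "RCf (\<lambda>_. 0) N 0"
  unfolding RCf_def by (auto simp: L2_set_def)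

lemma OB_mult:
  assumes "A \<in> carrier_mat N N" "B \<in> carrier_mat N N" "OB A N Ca" "OB B N Cb" "Ca \<ge> 0"
  shows "OB (A * B) N (Ca * Cb)"
  unfolding OB_def
proof
  fix v :: "complex vec" assume v: "v \<in> carrier_vec N"
  have "cvec_norm ((A * B) *\<^sub>v v) = cvec_norm (A *\<^sub>v (B *\<^sub>v v))" using assms v by simp
  also have "\<dots> \<le> Ca * cvec_norm (B *\<^sub>v v)" using assms(1,2,3) v unfolding OB_def by auto
  also have "\<dots> \<le> Ca * (Cb * cvec_norm v)"
    using assms(4,5) v unfolding OB_def by (auto intro: mult_left_mono)
  finally show "cvec_norm ((A * B) *\<^sub>v v) \<le> Ca * Cb * cvec_norm v" by (simp add: mult.assoc)
qed

lemma OB_RC: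
  assumes c: "c \<in> carrier_mat N N" and ob: "OB c N C" and C: "C \<ge> 0"
  shows "RCf (\<lambda>p. cmod (c $$ p)) N C"
  unfolding RCf_def
proof safe
  fix q assume q: "q < N"
  have uc: "unit_vec N q \<in> carrier_vec N" by simp
  have e: "(c *\<^sub>v unit_vec N q) $ i = c $$ (i,q)" if "i < N" for i
  proof -
    have "(c *\<^sub>v unit_vec N q) $ i = (\<Sum>j<N. c $$ (i,j) * unit_vec N q $ j)"
      by (rule mat_vec_entry[OF c uc that])
    also have "\<dots> = (\<Sum>j<N. if j = q then c $$ (i,j) else 0)"
      by (rule sum.cong) (auto simp: unit_vec_def)
    also have "\<dots> = c $$ (i,q)" using q by simp
    finally show ?thesis .
  qed
  have "cvec_norm (unit_vec N q) = 1"
  proof -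
    have "(\<Sum>j<N. (cmod (unit_vec N q $ j))\<^sup>2) = (\<Sum>j<N. if j = q then 1 else 0)"
      by (rule sum.cong) (auto simp: unit_vec_def)
    thus ?thesis using q by (simp add: cvec_norm_def)
  qed
  hence "cvec_norm (c *\<^sub>v unit_vec N q) \<le> C" using ob uc unfolding OB_def by (metis mult.right_neutral)
  moreover have "cvec_norm (c *\<^sub>v unit_vec N q) = L2_set (\<lambda>i. cmod (c $$ (i,q))) {..<N}"
    unfolding cvec_norm_L2 using c e by (auto intro: L2_set_cong)
  ultimately show "L2_set (\<lambda>i. cmod (c $$ (i,q))) {..<N} \<le> C" by simp
next
  fix p assume p: "p < N"
  define v where "v = vec N (\<lambda>j. cnj (c $$ (p,j)))"
  define S where "S = (\<Sum>j<N. (cmod (c $$ (p,j)))\<^sup>2)"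
  have S0: "S \<ge> 0" unfolding S_def by (simp add: sum_nonneg)
  have vc: "v \<in> carrier_vec N" by (simp add: v_def)
  have "(c *\<^sub>v v) $ p = (\<Sum>j<N. c $$ (p,j) * v $ j)" by (rule mat_vec_entry[OF c vc p])
  also have "\<dots> = (\<Sum>j<N. complex_of_real ((cmod (c $$ (p,j)))\<^sup>2))"
    by (rule sum.cong) (auto simp: v_def complex_mult_cnj cmod_power2)
  also have "\<dots> = complex_of_real S" by (simp add: S_def)
  finally have cp: "(c *\<^sub>v v) $ p = complex_of_real S" .
  have vn: "cvec_norm v = sqrt S"
    unfolding cvec_norm_def S_def by (simp add: v_def)
  have "S \<le> cvec_norm (c *\<^sub>v v)"
    using entry_le_cvec_norm[of p "c *\<^sub>v v"] cp c p S0 by simp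
  also have "\<dots> \<le> C * sqrt S" using ob vc vn unfolding OB_def by auto
  finally have "sqrt S * sqrt S \<le> C * sqrt S" using S0 by simp
  hence "sqrt S \<le> C" using C S0
    by (cases "sqrt S = 0") (simp, metis mult_right_le_imp_le real_sqrt_ge_zero order_less_le)
  thus "L2_set (\<lambda>j. cmod (c $$ (p,j))) {..<N} \<le> C" by (simp add: L2_set_def S_def)
qed

lemma sqrt_diff_le: assumes "x \<ge> 0" "y \<ge> 0" shows "\<bar>sqrt x - sqrt y\<bar> \<le> sqrt \<bar>x - y\<bar>"
proof (cases "x \<ge> y")
  case True
  have "sqrt x = sqrt (y + (x - y))" by simp
  also have "\<dots> \<le> sqrt y + sqrt (x - y)" using assms True by (intro sqrt_add_le_add_sqrt) auto
  finally show ?thesis using True by (simp add: real_sqrt_le_mono)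
next
  case False
  have "sqrt y = sqrt (x + (y - x))" by simp
  also have "\<dots> \<le> sqrt x + sqrt (y - x)" using assms False by (intro sqrt_add_le_add_sqrt) auto
  finally show ?thesis using False by (simp add: real_sqrt_le_mono)
qed

lemma L2_prod: "L2_set g (A \<times> B) = sqrt (\<Sum>i\<in>A. \<Sum>j\<in>B. (g (i,j))\<^sup>2)"
  unfolding L2_set_def by (simp add: sum.cartesian_product)

lemma hs_norm_sum: "A \<in> carrier_mat r r \<Longrightarrow> hs_norm A = sqrt ((\<Sum>i<r. \<Sum>j<r. (cmod (A $$ (i,j)))\<^sup>2) / r)"
  unfolding hs_norm_def by simp

lemma sum_le_L2sq: assumes "L2_set f A \<le> C" shows "(\<Sum>i\<in>A. (f i)\<^sup>2) \<le> C\<^sup>2"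
proof -
  have "(\<Sum>i\<in>A. (f i)\<^sup>2) = (L2_set f A)\<^sup>2" unfolding L2_set_def by (simp add: sum_nonneg)
  also have "\<dots> \<le> C\<^sup>2" using assms by (intro power_mono) auto
  finally show ?thesis .
qed

lemma alg5:
  fixes x T R1 R2 C :: real
  assumes x: "x > 0" and T0: "T \<ge> 0" and R10: "R1 \<ge> 0" and R20: "R2 \<ge> 0"
    and TC: "T \<le> (x+1) * C\<^sup>2" and R1C: "R1 \<le> C\<^sup>2" and R2C: "R2 \<le> C\<^sup>2"
  shows "\<bar>T / x - (T + R1 + R2) / (x+1)\<bar> \<le> 2 * C\<^sup>2 / x"
proof -
  have x1: "x + 1 > 0" using x by simp
  have eq: "T / x - (T + R1 + R2) / (x+1) = T / (x * (x+1)) - (R1 + R2) / (x+1)"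
    using x x1 by (simp add: divide_simps) (simp add: algebra_simps)
  have a: "0 \<le> T / (x * (x+1))" using T0 x x1 by simp
  have "T / (x * (x+1)) \<le> ((x+1) * C\<^sup>2) / (x * (x+1))"
    by (rule divide_right_mono) (use TC x x1 in auto)
  also have "\<dots> = C\<^sup>2 / x" unfolding mult.commute[of x]
    by (rule nonzero_mult_divide_mult_cancel_left) (use x1 in simp)
  finally have b: "T / (x * (x+1)) \<le> C\<^sup>2 / x" .
  have c1: "0 \<le> (R1 + R2) / (x+1)" using R10 R20 x1 by simp
  have "(R1 + R2) / (x+1) \<le> (R1 + R2) / x"
    using R10 R20 x by (intro divide_left_mono) auto
  also have "\<dots> \<le> (2 * C\<^sup>2) / x" using R1C R2C x by (intro divide_right_mono) auto
  finally have c2: "(R1 + R2) / (x+1) \<le> 2 * C\<^sup>2 / x" .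
  have "C\<^sup>2 / x \<le> 2 * C\<^sup>2 / x" using x by (simp add: divide_right_mono)
  thus ?thesis unfolding eq using a b c1 c2 by linarith
qed

lemma approx:
  assumes c: "c \<in> carrier_mat (m+1) (m+1)" and d: "d \<in> carrier_mat m m" and m: "m \<ge> 1"
    and rc: "RCf (\<lambda>p. cmod (c $$ p)) (m+1) C" and C: "C \<ge> 0" and e: "e \<ge> 0"
    and diff: "(\<Sum>i<m. \<Sum>j<m. (cmod (d $$ (i,j) - c $$ (i,j)))\<^sup>2) \<le> e\<^sup>2"
  shows "\<bar>hs_norm d - hs_norm c\<bar> \<le> e / sqrt m + sqrt (2 * C\<^sup>2 / m)"
proof -
  define T where "T = (\<Sum>i<m. \<Sum>j<m. (cmod (c $$ (i,j)))\<^sup>2)"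
  define D where "D = (\<Sum>i<m. \<Sum>j<m. (cmod (d $$ (i,j)))\<^sup>2)"
  define F where "F = (\<Sum>i<m+1. \<Sum>j<m+1. (cmod (c $$ (i,j)))\<^sup>2)"
  define R1 where "R1 = (\<Sum>i<m. (cmod (c $$ (i,m)))\<^sup>2)"
  define R2 where "R2 = (\<Sum>j<m+1. (cmod (c $$ (m,j)))\<^sup>2)"
  have T0: "T \<ge> 0" unfolding T_def by (intro sum_nonneg) auto
  have D0: "D \<ge> 0" unfolding D_def by (intro sum_nonneg) auto
  have R10: "R1 \<ge> 0" unfolding R1_def by (intro sum_nonneg) auto
  have R20: "R2 \<ge> 0" unfolding R2_def by (intro sum_nonneg) auto
  have hd: "hs_norm d = sqrt (D / m)" using hs_norm_sum[OF d] by (simp add: D_def)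
  have hc: "hs_norm c = sqrt (F / (m+1))" using hs_norm_sum[OF c] by (simp add: F_def)
  let ?I = "{..<m} \<times> {..<m}"
  have sD: "sqrt D = L2_set (\<lambda>p. cmod (d $$ p)) ?I" by (simp add: L2_prod D_def)
  have sT: "sqrt T = L2_set (\<lambda>p. cmod (c $$ p)) ?I" by (simp add: L2_prod T_def)
  have sE: "L2_set (\<lambda>p. cmod (d $$ p - c $$ p)) ?I \<le> e"
  proof -
    have "L2_set (\<lambda>p. cmod (d $$ p - c $$ p)) ?I = sqrt (\<Sum>i<m. \<Sum>j<m. (cmod (d $$ (i,j) - c $$ (i,j)))\<^sup>2)"
      by (simp add: L2_prod)
    also have "\<dots> \<le> sqrt (e\<^sup>2)" using diff by (rule real_sqrt_le_mono)
    also have "\<dots> = e" using e by simp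
    finally show ?thesis .
  qed
  have "sqrt D \<le> L2_set (\<lambda>p. cmod (c $$ p) + cmod (d $$ p - c $$ p)) ?I"
    unfolding sD by (rule L2_set_mono) (auto intro: norm_triangle_sub)
  also have "\<dots> \<le> sqrt T + e" unfolding sT using L2_set_triangle_ineq[of "\<lambda>p. cmod (c $$ p)" "\<lambda>p. cmod (d $$ p - c $$ p)" ?I] sE by linarith
  finally have 1: "sqrt D \<le> sqrt T + e" .
  have "sqrt T \<le> L2_set (\<lambda>p. cmod (d $$ p) + cmod (d $$ p - c $$ p)) ?I"
    unfolding sT by (rule L2_set_mono) (auto simp: norm_minus_commute intro: norm_triangle_sub)
  also have "\<dots> \<le> sqrt D + e" unfolding sD using L2_set_triangle_ineq[of "\<lambda>p. cmod (d $$ p)" "\<lambda>p. cmod (d $$ p - c $$ p)" ?I] sE by linarith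
  finally have 2: "sqrt T \<le> sqrt D + e" .
  have mpos: "real m > 0" using m by simp
  have 3: "\<bar>sqrt (D / m) - sqrt (T / m)\<bar> \<le> e / sqrt m"
  proof -
    have "\<bar>sqrt (D / m) - sqrt (T / m)\<bar> = \<bar>sqrt D - sqrt T\<bar> / sqrt m"
      by (simp add: real_sqrt_divide flip: diff_divide_distrib)
    also have "\<dots> \<le> e / sqrt m" using 1 2 mpos by (intro divide_right_mono) auto
    finally show ?thesis .
  qed
  have FT: "F = T + R1 + R2"
  proof -
    have "F = (\<Sum>i<m. \<Sum>j<Suc m. (cmod (c $$ (i,j)))\<^sup>2) + R2"
      unfolding F_def R2_def by (simp only: Suc_eq_plus1[symmetric] sum.lessThan_Suc)
    also have "(\<Sum>i<m. \<Sum>j<Suc m. (cmod (c $$ (i,j)))\<^sup>2) = T + R1"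
      unfolding T_def R1_def by (simp only: sum.lessThan_Suc sum.distrib)
    finally show ?thesis by simp
  qed
  have "R1 \<le> (\<Sum>i<m+1. (cmod (c $$ (i,m)))\<^sup>2)" unfolding R1_def by (simp)
  also have "\<dots> \<le> C\<^sup>2" using rc unfolding RCf_def by (intro sum_le_L2sq) auto
  finally have R1C: "R1 \<le> C\<^sup>2" .
  have R2C: "R2 \<le> C\<^sup>2" using rc unfolding RCf_def R2_def by (intro sum_le_L2sq) auto
  have "F \<le> (\<Sum>i<m+1. C\<^sup>2)" unfolding F_def
    by (rule sum_mono, rule sum_le_L2sq) (use rc in \<open>auto simp: RCf_def\<close>)
  hence FC: "F \<le> (m+1) * C\<^sup>2" by simp
  have TC: "T \<le> (m+1) * C\<^sup>2" using FC FT R10 R20 by linarith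
  have 5: "\<bar>T / m - F / (m+1)\<bar> \<le> 2 * C\<^sup>2 / m"
    using alg5[of "real m" T R1 R2 C] mpos T0 R10 R20 TC R1C R2C unfolding FT by (simp add: add.commute)
  have 6: "\<bar>sqrt (T / m) - sqrt (F / (m+1))\<bar> \<le> sqrt (2 * C\<^sup>2 / m)"
  proof -
    have "\<bar>sqrt (T / m) - sqrt (F / (m+1))\<bar> \<le> sqrt \<bar>T / m - F / (m+1)\<bar>"
      using T0 FT R10 R20 by (intro sqrt_diff_le) auto
    also have "\<dots> \<le> sqrt (2 * C\<^sup>2 / m)" using 5 by simp
    finally show ?thesis .
  qed
  show ?thesis unfolding hd hc using 3 6 by linarith
qed

lemma approx2:
  assumes c: "c \<in> carrier_mat (m+1) (m+1)" and d: "d \<in> carrier_mat m m" and m: "m \<ge> 1"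
    and rc: "RCf (\<lambda>p. cmod (c $$ p)) (m+1) C" and C: "C \<ge> 0" "C \<le> 3" and e: "e \<ge> 0" "e \<le> 1"
    and diff: "(\<Sum>i<m. \<Sum>j<m. (cmod (d $$ (i,j) - c $$ (i,j)))\<^sup>2) \<le> e\<^sup>2"
  shows "\<bar>hs_norm d - hs_norm c\<bar> \<le> 6 / sqrt m"
proof -
  have mpos: "sqrt (real m) > 0" using m by simp
  have s2: "sqrt 2 \<le> 3/2" by (rule real_le_lsqrt) (auto simp: power2_eq_square)
  have "sqrt (2 * C\<^sup>2 / m) = sqrt 2 * C / sqrt m" using C by (simp add: real_sqrt_divide real_sqrt_mult)
  also have "\<dots> \<le> (3/2) * 3 / sqrt m" using s2 C mpos
    by (intro divide_right_mono mult_mono) auto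
  finally have "sqrt (2 * C\<^sup>2 / m) \<le> 9/2 / sqrt m" by simp
  moreover have "e / sqrt m \<le> 1 / sqrt m" using e mpos by (intro divide_right_mono) auto
  moreover have "1 / sqrt m + 9/2 / sqrt m \<le> 6 / sqrt m" using mpos by (simp add: divide_simps)
  ultimately show ?thesis using approx[OF c d m rc C(1) e(1) diff] by linarith
qed

definition topm :: "nat \<Rightarrow> complex mat \<Rightarrow> complex mat" where
  "topm m c = mat m m (\<lambda>(i,j). c $$ (i,j))"

definition extm :: "nat \<Rightarrow> complex mat \<Rightarrow> complex mat" where
  "extm m x = mat (m+1) (m+1) (\<lambda>(i,j). if i < m \<and> j < m then x $$ (i,j) else 0)"

lemma topm_carrier[simp]: "topm m c \<in> carrier_mat m m" by (simp add: topm_def)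
lemma topm_dims[simp]: "dim_row (topm m c) = m" "dim_col (topm m c) = m" by (simp_all add: topm_def)
lemma topm_index[simp]: "i < m \<Longrightarrow> j < m \<Longrightarrow> topm m c $$ (i,j) = c $$ (i,j)" by (simp add: topm_def)

lemma unit_ball_OB: assumes "b \<in> unit_ball N" shows "OB b N 1"
  unfolding OB_def
proof
  fix v :: "complex vec" assume v: "v \<in> carrier_vec N"
  have bc: "b \<in> carrier_mat N N" and bn: "op_norm b \<le> 1" using assms by (auto simp: unit_ball_def)
  have "cvec_norm (b *\<^sub>v v) \<le> op_norm b * cvec_norm v" by (rule op_bound[OF bc v])
  also have "\<dots> \<le> 1 * cvec_norm v" using bn cvec_norm_nonneg[of v] by (intro mult_right_mono) auto
  finally show "cvec_norm (b *\<^sub>v v) \<le> 1 * cvec_norm v" .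
qed

lemma unit_ball_RC: assumes "b \<in> unit_ball N" shows "RCf (\<lambda>p. cmod (b $$ p)) N 1"
  using OB_RC[OF _ unit_ball_OB[OF assms]] assms by (auto simp: unit_ball_def)

lemma win:
  assumes m: "m \<ge> 1" and bU: "\<And>i. i < n \<Longrightarrow> b i \<in> unit_ball (m+1)"
    and ab: "\<And>i. i < n \<Longrightarrow> a i = topm m (b i)"
  shows "dup_wins_play n (6 / sqrt m) a b"
  unfolding dup_wins_play_def
proof (intro allI impI)
  fix i j k :: nat and y z :: complex
  assume i: "i < n" and j: "j < n" and k: "k < n" and yz: "max (cmod y) (cmod z) \<le> 1"
  have y: "cmod y \<le> 1" and z: "cmod z \<le> 1" using yz by auto
  let ?N = "m+1"
  have bc: "b l \<in> carrier_mat ?N ?N" if "l < n" for l using bU[OF that] by (simp add: unit_ball_def)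
  have ac: "a l \<in> carrier_mat m m" if "l < n" for l using ab[OF that] by simp
  have ae: "a l $$ (p,q) = b l $$ (p,q)" if "l < n" "p < m" "q < m" for l p q
    using ab[OF that(1)] that by simp
  have rc: "RCf (\<lambda>p. cmod (b l $$ p)) ?N 1" if "l < n" for l using unit_ball_RC[OF bU[OF that]] .
  have bi: "b i \<in> carrier_mat ?N ?N" and bj: "b j \<in> carrier_mat ?N ?N" and bk: "b k \<in> carrier_mat ?N ?N"
    using bc i j k by auto
  have ai: "a i \<in> carrier_mat m m" and aj: "a j \<in> carrier_mat m m" and ak: "a k \<in> carrier_mat m m"
    using ac i j k by auto
  show "\<bar>hs_norm (a i) - hs_norm (b i)\<bar> \<le> 6 / sqrt m \<and>
       \<bar>hs_norm (a i * a j - a k) - hs_norm (b i * b j - b k)\<bar> \<le> 6 / sqrt m \<and>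
       \<bar>hs_norm (y \<cdot>\<^sub>m a i + z \<cdot>\<^sub>m a j - a k) - hs_norm (y \<cdot>\<^sub>m b i + z \<cdot>\<^sub>m b j - b k)\<bar> \<le> 6 / sqrt m \<and>
       \<bar>hs_norm (adj (a i) - a j) - hs_norm (adj (b i) - b j)\<bar> \<le> 6 / sqrt m"
  proof (intro conjI)
    show "\<bar>hs_norm (a i) - hs_norm (b i)\<bar> \<le> 6 / sqrt m"
      by (rule approx2[OF bi ai m rc[OF i], of 0]) (use ae i in auto)
  next
    show "\<bar>hs_norm (a i * a j - a k) - hs_norm (b i * b j - b k)\<bar> \<le> 6 / sqrt m"
    proof (rule approx2[of _ _ _ 2 1])
      show "b i * b j - b k \<in> carrier_mat ?N ?N" using bi bj bk by auto
      show "a i * a j - a k \<in> carrier_mat m m" using ai aj ak by auto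
      have ob: "OB (b i * b j) ?N (1 * 1)"
        by (rule OB_mult[OF bi bj unit_ball_OB[OF bU[OF i]] unit_ball_OB[OF bU[OF j]]]) simp
      have rcp: "RCf (\<lambda>p. cmod ((b i * b j) $$ p)) ?N 1"
        using OB_RC[of "b i * b j" ?N 1] ob bi bj by auto
      show "RCf (\<lambda>p. cmod ((b i * b j - b k) $$ p)) ?N 2"
        using RCf_add[OF rcp rc[OF k], of "\<lambda>p. cmod ((b i * b j - b k) $$ p)"] bi bj bk
        by (simp add: norm_triangle_ineq4)
      have de: "(a i * a j - a k) $$ (p,q) - (b i * b j - b k) $$ (p,q) = - (b i $$ (p,m) * b j $$ (m,q))"
        if "p < m" "q < m" for p q
      proof -
        have "(a i * a j) $$ (p,q) = (\<Sum>r<m. a i $$ (p,r) * a j $$ (r,q))"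
          by (rule mat_mult_entry[OF ai aj that])
        also have "\<dots> = (\<Sum>r<m. b i $$ (p,r) * b j $$ (r,q))"
          using ae i j that by (intro sum.cong) auto
        finally have "(a i * a j - a k) $$ (p,q) = (\<Sum>r<m. b i $$ (p,r) * b j $$ (r,q)) - b k $$ (p,q)"
          using that ai aj ak ae k by simp
        moreover have "(b i * b j - b k) $$ (p,q) = (\<Sum>r<Suc m. b i $$ (p,r) * b j $$ (r,q)) - b k $$ (p,q)"
          using that bi bj bk mat_mult_entry[OF bi bj, of p q] by simp
        ultimately show ?thesis by simp
      qed
      have s1: "(\<Sum>p<m. (cmod (b i $$ (p,m)))\<^sup>2) \<le> 1"
      proof -
        have "(\<Sum>p<m. (cmod (b i $$ (p,m)))\<^sup>2) \<le> (\<Sum>p<?N. (cmod (b i $$ (p,m)))\<^sup>2)" by simp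
        also have "\<dots> \<le> 1\<^sup>2" using rc[OF i] by (intro sum_le_L2sq) (auto simp: RCf_def)
        finally show ?thesis by simp
      qed
      have s2: "(\<Sum>q<m. (cmod (b j $$ (m,q)))\<^sup>2) \<le> 1"
      proof -
        have "(\<Sum>q<m. (cmod (b j $$ (m,q)))\<^sup>2) \<le> (\<Sum>q<?N. (cmod (b j $$ (m,q)))\<^sup>2)" by simp
        also have "\<dots> \<le> 1\<^sup>2" using rc[OF j] by (intro sum_le_L2sq) (auto simp: RCf_def)
        finally show ?thesis by simp
      qed
      have "(\<Sum>p<m. \<Sum>q<m. (cmod ((a i * a j - a k) $$ (p,q) - (b i * b j - b k) $$ (p,q)))\<^sup>2)
          = (\<Sum>p<m. \<Sum>q<m. (cmod (b i $$ (p,m)))\<^sup>2 * (cmod (b j $$ (m,q)))\<^sup>2)"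
        by (intro sum.cong refl) (simp add: de norm_mult power_mult_distrib)
      also have "\<dots> = (\<Sum>p<m. (cmod (b i $$ (p,m)))\<^sup>2) * (\<Sum>q<m. (cmod (b j $$ (m,q)))\<^sup>2)"
        by (simp add: sum_product)
      also have "\<dots> \<le> 1 * 1" using s1 s2 by (intro mult_mono) (auto simp: sum_nonneg)
      finally show "(\<Sum>p<m. \<Sum>q<m. (cmod ((a i * a j - a k) $$ (p,q) - (b i * b j - b k) $$ (p,q)))\<^sup>2) \<le> 1\<^sup>2"
        by simp
    qed (use m in auto)
  next
    show "\<bar>hs_norm (y \<cdot>\<^sub>m a i + z \<cdot>\<^sub>m a j - a k) - hs_norm (y \<cdot>\<^sub>m b i + z \<cdot>\<^sub>m b j - b k)\<bar> \<le> 6 / sqrt m"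
    proof (rule approx2[of _ _ _ 3 0])
      show "y \<cdot>\<^sub>m b i + z \<cdot>\<^sub>m b j - b k \<in> carrier_mat ?N ?N" using bi bj bk by auto
      show "y \<cdot>\<^sub>m a i + z \<cdot>\<^sub>m a j - a k \<in> carrier_mat m m" using ai aj ak by auto
      have r2: "RCf (\<lambda>p. cmod (b i $$ p) + cmod (b j $$ p)) ?N (1 + 1)"
        by (rule RCf_add[OF rc[OF i] rc[OF j]]) auto
      have "RCf (\<lambda>p. cmod ((y \<cdot>\<^sub>m b i + z \<cdot>\<^sub>m b j - b k) $$ p)) ?N ((1 + 1) + 1)"
      proof (rule RCf_add[OF r2 rc[OF k]])
        fix p q assume pq: "p < ?N" "q < ?N"
        have "cmod (y * b i $$ (p,q) + z * b j $$ (p,q) - b k $$ (p,q))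
              \<le> cmod (y * b i $$ (p,q)) + cmod (z * b j $$ (p,q)) + cmod (b k $$ (p,q))"
          by (meson norm_triangle_ineq norm_triangle_ineq4 add_mono order_trans order_refl)
        also have "\<dots> \<le> cmod (b i $$ (p,q)) + cmod (b j $$ (p,q)) + cmod (b k $$ (p,q))"
          using y z by (intro add_mono) (auto simp: norm_mult intro: mult_left_le_one_le)
        finally show "0 \<le> cmod ((y \<cdot>\<^sub>m b i + z \<cdot>\<^sub>m b j - b k) $$ (p,q)) \<and>
          cmod ((y \<cdot>\<^sub>m b i + z \<cdot>\<^sub>m b j - b k) $$ (p,q)) \<le> cmod (b i $$ (p,q)) + cmod (b j $$ (p,q)) + cmod (b k $$ (p,q))"
          using pq bi bj bk by simp
      qed
      thus "RCf (\<lambda>p. cmod ((y \<cdot>\<^sub>m b i + z \<cdot>\<^sub>m b j - b k) $$ p)) ?N 3" by simp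
      have "(\<Sum>p<m. \<Sum>q<m. (cmod ((y \<cdot>\<^sub>m a i + z \<cdot>\<^sub>m a j - a k) $$ (p,q) - (y \<cdot>\<^sub>m b i + z \<cdot>\<^sub>m b j - b k) $$ (p,q)))\<^sup>2) = 0"
        using ai aj ak bi bj bk ae i j k by (intro sum.neutral ballI) simp
      thus "(\<Sum>p<m. \<Sum>q<m. (cmod ((y \<cdot>\<^sub>m a i + z \<cdot>\<^sub>m a j - a k) $$ (p,q) - (y \<cdot>\<^sub>m b i + z \<cdot>\<^sub>m b j - b k) $$ (p,q)))\<^sup>2) \<le> 0\<^sup>2"
        by simp
    qed (use m in auto)
  next
    show "\<bar>hs_norm (adj (a i) - a j) - hs_norm (adj (b i) - b j)\<bar> \<le> 6 / sqrt m"
    proof (rule approx2[of _ _ _ 2 0])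
      show "adj (b i) - b j \<in> carrier_mat ?N ?N" using bi bj by (auto simp: adj_def)
      show "adj (a i) - a j \<in> carrier_mat m m" using ai aj by (auto simp: adj_def)
      show "RCf (\<lambda>p. cmod ((adj (b i) - b j) $$ p)) ?N 2"
        using RCf_add[OF RCf_swap[OF rc[OF i]] rc[OF j], of "\<lambda>p. cmod ((adj (b i) - b j) $$ p)"] bi bj
        by (simp add: adj_def) (metis norm_triangle_ineq4 complex_mod_cnj)
      have "(\<Sum>p<m. \<Sum>q<m. (cmod ((adj (a i) - a j) $$ (p,q) - (adj (b i) - b j) $$ (p,q)))\<^sup>2) = 0"
        using ai aj bi bj ae i j by (intro sum.neutral ballI) (simp add: adj_def)
      thus "(\<Sum>p<m. \<Sum>q<m. (cmod ((adj (a i) - a j) $$ (p,q) - (adj (b i) - b j) $$ (p,q)))\<^sup>2) \<le> 0\<^sup>2"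
        by simp
    qed (use m in auto)
  qed
qed

lemma cvec_norm_unit: "q < N \<Longrightarrow> cvec_norm (unit_vec N q) = 1"
proof -
  assume q: "q < N"
  have "(\<Sum>j<N. (cmod (unit_vec N q $ j))\<^sup>2) = (\<Sum>j<N. if j = q then 1 else 0)"
    by (rule sum.cong) (auto simp: unit_vec_def)
  thus ?thesis using q by (simp add: cvec_norm_def)
qed

lemma L2_Suc: "L2_set f {..<m} \<le> L2_set f {..<Suc m}"
  unfolding L2_set_def by (intro real_sqrt_le_mono) simp

lemma op_norm_le1:
  assumes "A \<in> carrier_mat N N" "N \<ge> 1"
    and "\<And>u. u \<in> carrier_vec N \<Longrightarrow> cvec_norm u = 1 \<Longrightarrow> cvec_norm (A *\<^sub>v u) \<le> 1"
  shows "op_norm A \<le> 1"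
  unfolding op_norm_def
proof (rule cSUP_least)
  show "{x. x \<in> carrier_vec (dim_col A) \<and> cvec_norm x = 1} \<noteq> {}"
    using assms(1,2) cvec_norm_unit[of 0 N] by (auto intro!: exI[of _ "unit_vec N 0"])
qed (use assms in auto)

lemma topm_ball:
  assumes y: "y \<in> unit_ball (m+1)" and m: "m \<ge> 1"
  shows "topm m y \<in> unit_ball m"
proof -
  have yc: "y \<in> carrier_mat (m+1) (m+1)" and yn: "op_norm y \<le> 1" using y by (auto simp: unit_ball_def)
  have "op_norm (topm m y) \<le> 1"
  proof (rule op_norm_le1[OF topm_carrier m])
    fix u assume uc: "u \<in> carrier_vec m" and un: "cvec_norm u = 1"
    define w where "w = vec (m+1) (\<lambda>i. if i < m then u $ i else 0)"
    have wc: "w \<in> carrier_vec (m+1)" by (simp add: w_def)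
    have wn: "cvec_norm w = 1" using un uc unfolding cvec_norm_def w_def by simp
    have e: "(topm m y *\<^sub>v u) $ i = (y *\<^sub>v w) $ i" if "i < m" for i
    proof -
      have "(y *\<^sub>v w) $ i = (\<Sum>j<Suc m. y $$ (i,j) * w $ j)" using mat_vec_entry[OF yc wc, of i] that by simp
      also have "\<dots> = (\<Sum>j<m. y $$ (i,j) * u $ j)" by (simp add: w_def)
      also have "\<dots> = (topm m y *\<^sub>v u) $ i" using mat_vec_entry[OF topm_carrier uc that] that by simp
      finally show ?thesis by simp
    qed
    have "cvec_norm (topm m y *\<^sub>v u) = L2_set (\<lambda>i. cmod ((y *\<^sub>v w) $ i)) {..<m}"
      unfolding cvec_norm_L2 using e by (auto intro: L2_set_cong)
    also have "\<dots> \<le> L2_set (\<lambda>i. cmod ((y *\<^sub>v w) $ i)) {..<Suc m}" by (rule L2_Suc)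
    also have "\<dots> = cvec_norm (y *\<^sub>v w)" unfolding cvec_norm_L2 using yc by simp
    also have "\<dots> \<le> op_norm y * cvec_norm w" by (rule op_bound[OF yc wc])
    also have "\<dots> \<le> 1" using wn yn by simp
    finally show "cvec_norm (topm m y *\<^sub>v u) \<le> 1" .
  qed
  thus ?thesis by (simp add: unit_ball_def)
qed

lemma extm_ball:
  assumes x: "x \<in> unit_ball m" and m: "m \<ge> 1"
  shows "extm m x \<in> unit_ball (m+1)"
proof -
  have xc: "x \<in> carrier_mat m m" and xn: "op_norm x \<le> 1" using x by (auto simp: unit_ball_def)
  have ec: "extm m x \<in> carrier_mat (m+1) (m+1)" by (simp add: extm_def)
  have "op_norm (extm m x) \<le> 1"
  proof (rule op_norm_le1[OF ec])
    fix w assume wc: "w \<in> carrier_vec (m+1)" and wn: "cvec_norm w = 1"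
    define u where "u = vec m (\<lambda>i. w $ i)"
    have uc: "u \<in> carrier_vec m" by (simp add: u_def)
    have "cvec_norm u = L2_set (\<lambda>i. cmod (w $ i)) {..<m}" unfolding cvec_norm_L2 u_def
      by (auto intro: L2_set_cong)
    also have "\<dots> \<le> L2_set (\<lambda>i. cmod (w $ i)) {..<Suc m}" by (rule L2_Suc)
    also have "\<dots> = 1" using wn wc unfolding cvec_norm_L2 by simp
    finally have un: "cvec_norm u \<le> 1" .
    have e: "(extm m x *\<^sub>v w) $ i = (if i < m then (x *\<^sub>v u) $ i else 0)" if "i < Suc m" for i
    proof -
      have "(extm m x *\<^sub>v w) $ i = (\<Sum>j<Suc m. extm m x $$ (i,j) * w $ j)"
        using mat_vec_entry[OF ec wc, of i] that by simp
      also have "\<dots> = (if i < m then (\<Sum>j<m. x $$ (i,j) * u $ j) else 0)"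
        using that by (auto simp: extm_def u_def intro!: sum.neutral)
      also have "\<dots> = (if i < m then (x *\<^sub>v u) $ i else 0)"
        using mat_vec_entry[OF xc uc] by simp
      finally show ?thesis .
    qed
    have "cvec_norm (extm m x *\<^sub>v w) = L2_set (\<lambda>i. cmod ((extm m x *\<^sub>v w) $ i)) {..<Suc m}"
      unfolding cvec_norm_L2 using ec by simp
    also have "\<dots> = L2_set (\<lambda>i. cmod ((x *\<^sub>v u) $ i)) {..<m}"
      unfolding L2_set_def using e by simp
    also have "\<dots> = cvec_norm (x *\<^sub>v u)" unfolding cvec_norm_L2 using xc by simp
    also have "\<dots> \<le> op_norm x * cvec_norm u" by (rule op_bound[OF xc uc])
    also have "\<dots> \<le> 1 * 1" using xn un cvec_norm_nonneg[of u] op_norm_le1 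
      by (intro mult_mono) (auto intro: order_trans[OF cvec_norm_nonneg])
    finally show "cvec_norm (extm m x *\<^sub>v w) \<le> 1" by simp
  qed (use m in simp)
  thus ?thesis using ec by (simp add: unit_ball_def)
qed

lemma topm_extm: "x \<in> carrier_mat m m \<Longrightarrow> topm m (extm m x) = x"
  by (rule eq_matI) (auto simp: topm_def extm_def)

lemma play_const:
  assumes "\<And>h s x. \<sigma> h s x = \<tau> s x"
  shows "play \<sigma> cs = map (\<lambda>(s,x). (s, x, \<tau> s x)) cs"
  by (induction cs rule: rev_induct) (auto simp: play_def assms)

lemma wins_mono: "dup_wins_play n e1 a b \<Longrightarrow> e1 \<le> e2 \<Longrightarrow> dup_wins_play n e2 a b"
  unfolding dup_wins_play_def
proof (intro allI impI)
  fix i j k :: nat and y z :: complex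
  assume A: "\<forall>i<n. \<forall>j<n. \<forall>k<n. \<forall>y z. max (cmod y) (cmod z) \<le> 1 \<longrightarrow>
       \<bar>hs_norm (a i) - hs_norm (b i)\<bar> \<le> e1 \<and>
       \<bar>hs_norm (a i * a j - a k) - hs_norm (b i * b j - b k)\<bar> \<le> e1 \<and>
       \<bar>hs_norm (y \<cdot>\<^sub>m a i + z \<cdot>\<^sub>m a j - a k) - hs_norm (y \<cdot>\<^sub>m b i + z \<cdot>\<^sub>m b j - b k)\<bar> \<le> e1 \<and>
       \<bar>hs_norm (adj (a i) - a j) - hs_norm (adj (b i) - b j)\<bar> \<le> e1"
    and e: "e1 \<le> e2" and ijk: "i < n" "j < n" "k < n" and yz: "max (cmod y) (cmod z) \<le> 1"
  from A ijk yz have "\<bar>hs_norm (a i) - hs_norm (b i)\<bar> \<le> e1 \<and>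
       \<bar>hs_norm (a i * a j - a k) - hs_norm (b i * b j - b k)\<bar> \<le> e1 \<and>
       \<bar>hs_norm (y \<cdot>\<^sub>m a i + z \<cdot>\<^sub>m a j - a k) - hs_norm (y \<cdot>\<^sub>m b i + z \<cdot>\<^sub>m b j - b k)\<bar> \<le> e1 \<and>
       \<bar>hs_norm (adj (a i) - a j) - hs_norm (adj (b i) - b j)\<bar> \<le> e1" by blast
  thus "\<bar>hs_norm (a i) - hs_norm (b i)\<bar> \<le> e2 \<and>
       \<bar>hs_norm (a i * a j - a k) - hs_norm (b i * b j - b k)\<bar> \<le> e2 \<and>
       \<bar>hs_norm (y \<cdot>\<^sub>m a i + z \<cdot>\<^sub>m a j - a k) - hs_norm (y \<cdot>\<^sub>m b i + z \<cdot>\<^sub>m b j - b k)\<bar> \<le> e2 \<and>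
       \<bar>hs_norm (adj (a i) - a j) - hs_norm (adj (b i) - b j)\<bar> \<le> e2" using e by linarith
qed

lemma strat_wins:
  assumes m: "m \<ge> 1"
  shows "dup_winning_strategy m (m + 1) n (6 / sqrt m) (\<lambda>h s x. if s then extm m x else topm m x)"
  unfolding dup_winning_strategy_def
proof (intro allI impI)
  fix cs :: "(bool \<times> complex mat) list"
  assume cs: "length cs = n \<and> (\<forall>(s, x)\<in>set cs. x \<in> unit_ball (if s then m else m + 1))"
  let ?\<tau> = "\<lambda>s x. if s then extm m x else topm m x"
  have h: "play (\<lambda>h s x. if s then extm m x else topm m x) cs = map (\<lambda>(s,x). (s, x, ?\<tau> s x)) cs"
    by (rule play_const) simp
  have resp: "?\<tau> s x \<in> unit_ball (if s then m + 1 else m)" if "(s,x) \<in> set cs" for s x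
    using cs that extm_ball[OF _ m] topm_ball[OF _ m] by (cases s) auto
  define H where "H = map (\<lambda>(s,x). (s, x, ?\<tau> s x)) cs"
  have HL: "length H = n" using cs by (simp add: H_def)
  have Hi: "H ! i = (fst (cs ! i), snd (cs ! i), ?\<tau> (fst (cs ! i)) (snd (cs ! i)))" if "i < n" for i
    using that cs by (simp add: H_def case_prod_beta)
  have csi: "snd (cs ! i) \<in> unit_ball (if fst (cs ! i) then m else m + 1)" if "i < n" for i
    proof -
    have "cs ! i \<in> set cs" using that cs by simp
    hence "(fst (cs ! i), snd (cs ! i)) \<in> set cs" by simp
    thus ?thesis using cs by blast
  qed
  have bU: "right_mat (H ! i) \<in> unit_ball (m+1)" if "i < n" for i
    using Hi[OF that] csi[OF that] extm_ball[OF _ m] by (auto simp: right_mat_def)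
  have ab: "left_mat (H ! i) = topm m (right_mat (H ! i))" if "i < n" for i
    using Hi[OF that] csi[OF that] by (auto simp: right_mat_def left_mat_def unit_ball_def topm_extm)
  have w: "dup_wins_play n (6 / sqrt m) (\<lambda>i. left_mat (H ! i)) (\<lambda>i. right_mat (H ! i))"
    by (rule win[OF m bU ab])
  have r: "\<forall>(s, x, y)\<in>set H. y \<in> unit_ball (if s then m + 1 else m)"
    using resp by (auto simp: H_def)
  show "let h = play (\<lambda>h s x. if s then extm m x else topm m x) cs
        in (\<forall>(s, x, y)\<in>set h. y \<in> unit_ball (if s then m + 1 else m)) \<and>
           dup_wins_play n (6 / sqrt m) (\<lambda>i. left_mat (h ! i)) (\<lambda>i. right_mat (h ! i))"
    unfolding h H_def[symmetric] Let_def using r w by simp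
qed

theorem lemma5:
  fixes n :: nat and \<epsilon> :: real
  assumes "n \<ge> 1" and "\<epsilon> > 0"
  shows "\<exists>M. \<forall>m\<ge>M. \<exists>\<sigma>. dup_winning_strategy m (m + 1) n \<epsilon> \<sigma>"
proof (rule exI[of _ "nat \<lceil>36 / \<epsilon>\<^sup>2\<rceil> + 1"], intro allI impI)
  fix m :: nat
  assume mM: "m \<ge> nat \<lceil>36 / \<epsilon>\<^sup>2\<rceil> + 1"
  hence m: "m \<ge> 1" by simp
  have "real m \<ge> 36 / \<epsilon>\<^sup>2" using mM by linarith
  hence "\<epsilon>\<^sup>2 * real m \<ge> 36" using assms(2) by (simp add: divide_le_eq mult.commute)
  hence "sqrt (\<epsilon>\<^sup>2 * real m) \<ge> sqrt 36" by (rule real_sqrt_le_mono)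
  hence "\<epsilon> * sqrt m \<ge> 6" using assms(2) by (simp add: real_sqrt_mult)
  hence e: "6 / sqrt m \<le> \<epsilon>" using m by (simp add: divide_le_eq)
  have "dup_winning_strategy m (m + 1) n (6 / sqrt m) (\<lambda>h s x. if s then extm m x else topm m x)"
    by (rule strat_wins[OF m])
  hence "dup_winning_strategy m (m + 1) n \<epsilon> (\<lambda>h s x. if s then extm m x else topm m x)"
    unfolding dup_winning_strategy_def Let_def using wins_mono[OF _ e] by blast
  thus "\<exists>\<sigma>. dup_winning_strategy m (m + 1) n \<epsilon> \<sigma>" by blast
qed

end
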